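(* Let $c$ be a prefix equivariant statistic and $\theta>0$. Let $2\le k\le N$, $p=e_{k-1}=12\cdots(k-1)$ and $q=e_k=12\cdots k$. Let $R$ be the set of permutations $r\in\mathfrak S_k$ with $r\ne q$ whose $(k-1)$-st prefix flattening equals $p$. Then $$\widehat S^c(p)=\widehat{\bar S}(q)+\widehat S^c(q)\sum_{r\in R}\theta^{c(r)-c(q)},\qquad \widehat S(p)=\widehat S(q)\sum_{r\in R}\theta^{c(r)-c(q)}.$$
   Context: Permutations of $\{1,\dots,m\}$ are written in one-line notation; $\mathfrak S_m$ is the set of all of them. Fix $N\ge1$, a statistic $c:\bigcup_{m=1}^N\mathfrak S_m\to\mathbb Z_{\ge0}$ and a real $\theta>0$. Prefixes and containment: - A prefix is an element of $\bigcup_{m=1}^N\mathfrak S_m$. - $\pi^{(i)}\in\mathfrak S_i$ denotes the unique permutation with the same relative order as $\pi_1,\dots,\pi_i$. - A prefix $r\in\mathfrak S_n$ contains $p\in\mathfrak S_m$ ($m\le n$) if $r^{(m)}=p$. - For $p\in\mathfrak S_m$ and $\pi\in\mathfrak S_N$: $\pi$ is $p$-prefixed if $\pi^{(m)}=p$, and $p$-winnable if moreover $\pi_m=N$. Probabilities: - $D(p)=\sum_{p\text{-prefixed }\pi\in\mathfrak S_N}\theta^{c(\pi)}$. - $S(p)=\big(\sum_{p\text{-winnable }\pi}\theta^{c(\pi)}\big)/D(p)$. - $S^c(p)=0$ if $p\in\mathfrak S_N$; for $p\in\mathfrak S_m$ with $m<N$, $S^c(p)=\big(\sum_{q'\in\mathfrak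 S_{m+1}\text{ containing }p}D(q')\bar S(q')\big)/D(p)$. - $\bar S(p)=\max(S(p),S^c(p))$. Numerators over the standard denominator $D(p)$ are written $\widehat S(p)=D(p)S(p)$, $\widehat S^c(p)=D(p)S^c(p)$ and $\widehat{\bar S}(p)=D(p)\bar S(p)$. Let $e_k=12\cdots k$. For $q\in\mathfrak S_k$ and $\pi\in\mathfrak S_m$ ($k\le m\le N$) with $\pi_1<\cdots<\pi_k$, $\sigma_q\cdot\pi\in\mathfrak S_m$ is given by $(\sigma_q\cdot\pi)_i=\pi_{q_i}$ for $i\le k$ and $(\sigma_q\cdot\pi)_i=\pi_i$ for $i>k$. The statistic $c$ is prefix equivariant if $c(\pi)-c(\sigma_q\cdot\pi)=c(e_k)-c(q)$ for all $k$, all $q\in\mathfrak S_k$, and all such $\pi$. *)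

theory Defs
  imports Complex_Main
begin

definition perms :: "nat \<Rightarrow> nat list set" where
  "perms m = {xs. distinct xs \<and> set xs = {1..m}}"

(* standardization (flattening): the permutation with the same relative order *)
definition flat :: "nat list \<Rightarrow> nat list" where
  "flat xs = map (\<lambda>x. card {y \<in> set xs. y \<le> x}) xs"

definition pref :: "nat \<Rightarrow> nat list \<Rightarrow> nat list" where
  "pref i xs = flat (take i xs)"

definition idp :: "nat \<Rightarrow> nat list" where
  "idp k = [1..<Suc k]"

definition prefixed :: "nat \<Rightarrow> nat list \<Rightarrow> nat list set" where
  "prefixed N p = {\<pi> \<in> perms N. pref (length p) \<pi> = p}"

definition winnable :: "nat \<Rightarrow> nat list \<Rightarrow> nat list set" where
  "winnable N p = {\<pi> \<in> prefixed N p. \<pi> ! (length p - 1) = N}"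

definition D :: "nat \<Rightarrow> (nat list \<Rightarrow> nat) \<Rightarrow> real \<Rightarrow> nat list \<Rightarrow> real" where
  "D N c \<theta> p = (\<Sum>\<pi>\<in>prefixed N p. \<theta> ^ c \<pi>)"

definition S :: "nat \<Rightarrow> (nat list \<Rightarrow> nat) \<Rightarrow> real \<Rightarrow> nat list \<Rightarrow> real" where
  "S N c \<theta> p = (\<Sum>\<pi>\<in>winnable N p. \<theta> ^ c \<pi>) / D N c \<theta> p"

(* S^c by recursion on the remaining length N - |p| *)
fun Sc_aux :: "nat \<Rightarrow> nat \<Rightarrow> (nat list \<Rightarrow> nat) \<Rightarrow> real \<Rightarrow> nat list \<Rightarrow> real" where
  "Sc_aux 0 N c \<theta> p = 0"
| "Sc_aux (Suc j) N c \<theta> p =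
     (\<Sum>q'\<in>{q' \<in> perms (Suc (length p)). pref (length p) q' = p}.
        D N c \<theta> q' * max (S N c \<theta> q') (Sc_aux j N c \<theta> q')) / D N c \<theta> p"

definition Sc :: "nat \<Rightarrow> (nat list \<Rightarrow> nat) \<Rightarrow> real \<Rightarrow> nat list \<Rightarrow> real" where
  "Sc N c \<theta> p = Sc_aux (N - length p) N c \<theta> p"

definition Sbar :: "nat \<Rightarrow> (nat list \<Rightarrow> nat) \<Rightarrow> real \<Rightarrow> nat list \<Rightarrow> real" where
  "Sbar N c \<theta> p = max (S N c \<theta> p) (Sc N c \<theta> p)"

definition S_hat :: "nat \<Rightarrow> (nat list \<Rightarrow> nat) \<Rightarrow> real \<Rightarrow> nat list \<Rightarrow> real" where
  "S_hat N c \<theta> p = D N c \<theta> p * S N c \<theta> p"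

definition Sc_hat :: "nat \<Rightarrow> (nat list \<Rightarrow> nat) \<Rightarrow> real \<Rightarrow> nat list \<Rightarrow> real" where
  "Sc_hat N c \<theta> p = D N c \<theta> p * Sc N c \<theta> p"

definition Sbar_hat :: "nat \<Rightarrow> (nat list \<Rightarrow> nat) \<Rightarrow> real \<Rightarrow> nat list \<Rightarrow> real" where
  "Sbar_hat N c \<theta> p = D N c \<theta> p * Sbar N c \<theta> p"

definition act :: "nat list \<Rightarrow> nat list \<Rightarrow> nat list" where
  "act q \<pi> = map (\<lambda>i. \<pi> ! (q ! i - 1)) [0..<length q] @ drop (length q) \<pi>"

definition prefix_equivariant :: "nat \<Rightarrow> (nat list \<Rightarrow> nat) \<Rightarrow> bool" where
  "prefix_equivariant N c \<longleftrightarrow>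
     (\<forall>k m q \<pi>. 1 \<le> k \<longrightarrow> k \<le> m \<longrightarrow> m \<le> N \<longrightarrow> q \<in> perms k \<longrightarrow> \<pi> \<in> perms m \<longrightarrow>
        sorted_wrt (<) (take k \<pi>) \<longrightarrow>
        int (c \<pi>) - int (c (act q \<pi>)) = int (c (idp k)) - int (c q))"

end

theory Submission
  imports Defs
begin

definition reidx :: "(nat \<Rightarrow> nat) \<Rightarrow> nat list \<Rightarrow> nat list" where
  "reidx \<sigma> xs = map (\<lambda>i. xs ! \<sigma> i) [0..<length xs]"

definition bij_lt :: "nat \<Rightarrow> (nat \<Rightarrow> nat) \<Rightarrow> (nat \<Rightarrow> nat) \<Rightarrow> bool" where
  "bij_lt n \<sigma> \<tau> \<longleftrightarrow> (\<forall>i<n. \<sigma> i < n \<and> \<tau> i < n \<and> \<sigma> (\<tau> i) = i \<and> \<tau> (\<sigma> i) = i)"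

lemma reidx_length[simp]: "length (reidx \<sigma> xs) = length xs"
  by (simp add: reidx_def)

lemma reidx_nth[simp]: "i < length xs \<Longrightarrow> reidx \<sigma> xs ! i = xs ! \<sigma> i"
  by (simp add: reidx_def)

lemma bij_lt_sym: "bij_lt n \<sigma> \<tau> \<Longrightarrow> bij_lt n \<tau> \<sigma>"
  by (auto simp: bij_lt_def)

lemma reidx_inv: "bij_lt (length xs) \<sigma> \<tau> \<Longrightarrow> reidx \<tau> (reidx \<sigma> xs) = xs"
  by (rule nth_equalityI) (auto simp: bij_lt_def)

lemma reidx_set: assumes "bij_lt (length xs) \<sigma> \<tau>" shows "set (reidx \<sigma> xs) = set xs"
proof
  show "set (reidx \<sigma> xs) \<subseteq> set xs"
    using assms unfolding reidx_def bij_lt_def by (auto intro!: nth_mem)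
  show "set xs \<subseteq> set (reidx \<sigma> xs)"
  proof
    fix x assume "x \<in> set xs"
    then obtain j where j: "j < length xs" "xs ! j = x" by (auto simp: in_set_conv_nth)
    then have "reidx \<sigma> xs ! (\<tau> j) = x" "\<tau> j < length xs" using assms by (auto simp: bij_lt_def)
    then show "x \<in> set (reidx \<sigma> xs)" by (metis nth_mem reidx_length)
  qed
qed

lemma reidx_distinct: assumes "bij_lt (length xs) \<sigma> \<tau>" shows "distinct (reidx \<sigma> xs) = distinct xs"
  using reidx_set[OF assms] by (metis card_distinct distinct_card reidx_length)

lemma reidx_map: "bij_lt (length xs) \<sigma> \<tau> \<Longrightarrow> map f (reidx \<sigma> xs) = reidx \<sigma> (map f xs)"
  by (rule nth_equalityI) (auto simp: bij_lt_def)

lemma reidx_take: "bij_lt m \<sigma> \<tau> \<Longrightarrow> m \<le> length xs \<Longrightarrow> take m (reidx \<sigma> xs) = reidx \<sigma> (take m xs)"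
  by (rule nth_equalityI) (auto simp: bij_lt_def)

lemma reidx_flat: assumes "bij_lt (length xs) \<sigma> \<tau>" shows "flat (reidx \<sigma> xs) = reidx \<sigma> (flat xs)"
  unfolding flat_def reidx_set[OF assms] by (rule reidx_map[OF assms])

definition sig :: "nat list \<Rightarrow> nat \<Rightarrow> nat" where
  "sig r i = (if i < length r then r ! i - 1 else i)"

definition sig' :: "nat list \<Rightarrow> nat \<Rightarrow> nat" where
  "sig' r i = (if i < length r then (THE j. j < length r \<and> r ! j = Suc i) else i)"

lemma the_idx: assumes "distinct r" "j < length r" shows "(THE j'. j' < length r \<and> r ! j' = r ! j) = j"
proof (rule the_equality)
  show "j < length r \<and> r ! j = r ! j" using assms by simp
  fix j' assume "j' < length r \<and> r ! j' = r ! j"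
  then show "j' = j" using nth_eq_iff_index_eq[OF assms(1), of j' j] assms by simp
qed

lemma perm_mem: assumes "r \<in> perms k" shows "length r = k"
proof -
  have "distinct r" "set r = {1..k}" using assms by (simp_all add: perms_def)
  then have "length r = card {1..k}" using distinct_card by metis
  then show ?thesis by simp
qed

lemma bij_lt_sig: assumes r: "r \<in> perms k" and n: "k \<le> n" shows "bij_lt n (sig r) (sig' r)"
proof -
  have d: "distinct r" and s: "set r = {1..k}" and l: "length r = k" using r perm_mem[OF r] by (auto simp: perms_def)
  have a: "\<And>i. i < k \<Longrightarrow> 1 \<le> r ! i \<and> r ! i \<le> k" using s l nth_mem by (metis atLeastAtMost_iff)
  have b: "\<exists>j<k. r ! j = Suc i" if "i < k" for i
  proof -
    have "Suc i \<in> set r" using s that by auto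
    then show ?thesis using l by (auto simp: in_set_conv_nth)
  qed
  show ?thesis unfolding bij_lt_def
  proof (intro allI impI)
    fix i assume i: "i < n"
    show "sig r i < n \<and> sig' r i < n \<and> sig r (sig' r i) = i \<and> sig' r (sig r i) = i"
    proof (cases "i < k")
      case True
      obtain j where j: "j < k" "r ! j = Suc i" using b[OF True] by blast
      have t: "(THE j. j < length r \<and> r ! j = Suc i) = j" using the_idx[OF d, of j] j l by simp
      have t2: "(THE j. j < length r \<and> r ! j = Suc (r ! i - 1)) = i"
        using the_idx[OF d, of i] True l a[OF True] by simp
      show ?thesis using True j t t2 a[OF True] l n unfolding sig_def sig'_def by auto
    next
      case False then show ?thesis using i l unfolding sig_def sig'_def by auto
    qed
  qed
qed

lemma act_reidx: assumes "length r \<le> length xs" shows "act r xs = reidx (sig r) xs"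
  by (rule nth_equalityI) (use assms in \<open>auto simp: act_def sig_def nth_append\<close>)


lemma rank_mono: "strict_mono_on (set (xs::nat list)) (\<lambda>x. card {y \<in> set xs. y \<le> x})"
proof (rule strict_mono_onI)
  fix x x' assume "x \<in> set xs" "x' \<in> set xs" "x < x'"
  then have "{y \<in> set xs. y \<le> x} \<subseteq> {y \<in> set xs. y \<le> x'}"
    "x' \<in> {y \<in> set xs. y \<le> x'}" "x' \<notin> {y \<in> set xs. y \<le> x}" by auto
  then have "{y \<in> set xs. y \<le> x} \<subset> {y \<in> set xs. y \<le> x'}" by blast
  then show "card {y \<in> set xs. y \<le> x} < card {y \<in> set xs. y \<le> x'}"
    by (rule psubset_card_mono[rotated]) simp
qed

lemma flat_map_mono: assumes f: "strict_mono_on (set xs) f" shows "flat (map f xs) = flat xs"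
  unfolding flat_def map_map
proof (rule map_cong[OF refl])
  fix x assume x: "x \<in> set xs"
  have "{y \<in> set (map f xs). y \<le> f x} = f ` {y \<in> set xs. y \<le> x}"
    using strict_mono_on_less_eq[OF f _ x] by auto
  moreover have "inj_on f {y \<in> set xs. y \<le> x}"
    using strict_mono_on_imp_inj_on[OF f] by (rule inj_on_subset) auto
  ultimately show "((\<lambda>xa. card {y \<in> set (map f xs). y \<le> xa}) \<circ> f) x = card {y \<in> set xs. y \<le> x}"
    by (simp add: card_image)
qed

lemma flat_take: "flat (take k (flat xs)) = flat (take k xs)"
proof -
  have "take k (flat xs) = map (\<lambda>x. card {y \<in> set xs. y \<le> x}) (take k xs)"
    by (simp add: flat_def take_map)
  moreover have "strict_mono_on (set (take k xs)) (\<lambda>x. card {y \<in> set xs. y \<le> x})"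
    using rank_mono by (rule monotone_on_subset) (rule set_take_subset)
  ultimately show ?thesis by (simp add: flat_map_mono)
qed

lemma pref_pref: "k \<le> m \<Longrightarrow> pref k (pref m \<pi>) = pref k \<pi>"
  by (simp add: pref_def flat_take min_def)

lemma flat_id: assumes "set xs = {1..length xs}" shows "flat xs = xs"
proof -
  have "card {y \<in> set xs. y \<le> x} = x" if "x \<in> set xs" for x
  proof -
    have "{y \<in> set xs. y \<le> x} = {1..x}" using assms that by auto
    then show ?thesis by simp
  qed
  then show ?thesis unfolding flat_def by (simp add: map_idI)
qed

lemma flat_length[simp]: "length (flat xs) = length xs" by (simp add: flat_def)

lemma flat_nth: "i < length xs \<Longrightarrow> flat xs ! i = card {y \<in> set xs. y \<le> xs ! i}"
  by (simp add: flat_def)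

lemma flat_perm: assumes d: "distinct xs" shows "flat xs \<in> perms (length xs)"
proof -
  let ?f = "\<lambda>x. card {y \<in> set xs. y \<le> x}"
  have inj: "inj_on ?f (set xs)" using rank_mono by (rule strict_mono_on_imp_inj_on)
  have sub: "?f ` set xs \<subseteq> {1..length xs}"
  proof
    fix z assume "z \<in> ?f ` set xs"
    then obtain x where x: "x \<in> set xs" "z = ?f x" by auto
    have "{y \<in> set xs. y \<le> x} \<noteq> {}" using x by auto
    then have "1 \<le> z" using x by (simp add: Suc_leI card_gt_0_iff)
    moreover have "z \<le> card (set xs)" using x by (auto intro: card_mono)
    ultimately show "z \<in> {1..length xs}" using distinct_card[OF d] by simp
  qed
  have "card (?f ` set xs) = length xs" using card_image[OF inj] distinct_card[OF d] by simp
  then have "?f ` set xs = {1..length xs}" using sub by (intro card_subset_eq) auto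
  then show ?thesis unfolding perms_def flat_def using inj by (simp add: distinct_map d)
qed

lemma rank_max: assumes "x \<in> set xs" "\<forall>y\<in>set xs. y \<le> x" "distinct xs"
  shows "card {y \<in> set xs. y \<le> x} = length xs"
proof -
  have "{y \<in> set xs. y \<le> x} = set xs" using assms by auto
  then show ?thesis using distinct_card[OF assms(3)] by simp
qed

lemma sorted_of_flat: assumes "sorted_wrt (<) (flat xs)" shows "sorted_wrt (<) xs"
proof -
  have "sorted_wrt (\<lambda>a b. card {y \<in> set xs. y \<le> a} < card {y \<in> set xs. y \<le> b}) xs"
    using assms by (simp add: flat_def sorted_wrt_map)
  then show ?thesis
    by (rule sorted_wrt_mono_rel[rotated]) (use strict_mono_on_less[OF rank_mono] in blast)
qed

lemma idp_length[simp]: "length (idp k) = k" by (simp add: idp_def)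
lemma idp_nth[simp]: "i < k \<Longrightarrow> idp k ! i = Suc i" by (simp add: idp_def del: upt_Suc)
lemma idp_set: "set (idp k) = {1..k}" unfolding idp_def set_upt by auto
lemma idp_perm: "idp k \<in> perms k" unfolding perms_def using idp_set by (simp add: idp_def del: upt_Suc)
lemma idp_sorted: "sorted_wrt (<) (idp k)" by (simp add: idp_def sorted_wrt_iff_nth_less del: upt_Suc)
lemma take_idp: "m \<le> k \<Longrightarrow> take m (idp k) = idp m"
  by (simp add: idp_def take_upt del: upt_Suc)
lemma pref_idp: "m \<le> k \<Longrightarrow> pref m (idp k) = idp m"
  by (simp add: pref_def take_idp flat_id idp_set)

lemma sorted_of_pref: "pref k \<pi> = idp k \<Longrightarrow> sorted_wrt (<) (take k \<pi>)"
  by (rule sorted_of_flat) (simp add: pref_def idp_sorted)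

lemma perms_finite: "finite (perms m)"
proof -
  have "perms m \<subseteq> {xs. set xs \<subseteq> {1..m} \<and> length xs = m}"
    by (auto simp: perms_def perm_mem[unfolded perms_def])
  then show ?thesis by (rule finite_subset) (rule finite_lists_length_eq, simp)
qed


lemma act_len[simp]: "length r \<le> length xs \<Longrightarrow> length (act r xs) = length xs"
  by (simp add: act_def)

lemma unact_act: "r \<in> perms k \<Longrightarrow> k \<le> length xs \<Longrightarrow> reidx (sig' r) (act r xs) = xs"
  by (simp add: act_reidx perm_mem reidx_inv bij_lt_sig)

lemma act_unact: "r \<in> perms k \<Longrightarrow> k \<le> length t \<Longrightarrow> act r (reidx (sig' r) t) = t"
  by (simp add: act_reidx perm_mem reidx_inv bij_lt_sig bij_lt_sym)

lemma act_perms: assumes "r \<in> perms k" "\<pi> \<in> perms n" "k \<le> n" shows "act r \<pi> \<in> perms n"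
proof -
  have l: "length \<pi> = n" using assms perm_mem by blast
  have b: "bij_lt (length \<pi>) (sig r) (sig' r)" using bij_lt_sig assms l by simp
  have "act r \<pi> = reidx (sig r) \<pi>" using act_reidx perm_mem[OF assms(1)] l assms(3) by simp
  then show ?thesis using assms l reidx_set[OF b] reidx_distinct[OF b]
    by (simp add: perms_def)
qed

lemma unact_perms: assumes "r \<in> perms k" "\<pi> \<in> perms n" "k \<le> n" shows "reidx (sig' r) \<pi> \<in> perms n"
proof -
  have l: "length \<pi> = n" using assms perm_mem by blast
  have b: "bij_lt (length \<pi>) (sig' r) (sig r)" using bij_lt_sig assms l bij_lt_sym by simp
  show ?thesis using assms l reidx_set[OF b] reidx_distinct[OF b]
    by (simp add: perms_def)
qed

lemma pref_reidx: assumes "bij_lt m \<sigma> \<tau>" "m \<le> length \<pi>"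
  shows "pref m (reidx \<sigma> \<pi>) = reidx \<sigma> (pref m \<pi>)"
proof -
  have "pref m (reidx \<sigma> \<pi>) = flat (reidx \<sigma> (take m \<pi>))"
    by (simp add: pref_def reidx_take[OF assms])
  also have "\<dots> = reidx \<sigma> (pref m \<pi>)"
    using assms by (simp add: pref_def reidx_flat min_def)
  finally show ?thesis .
qed

lemma pref_act: assumes "r \<in> perms k" "k \<le> m" "m \<le> length \<pi>"
  shows "pref m (act r \<pi>) = act r (pref m \<pi>)"
  using assms pref_reidx[OF bij_lt_sig[OF assms(1,2)] assms(3)]
  by (simp add: act_reidx perm_mem pref_def min_def)

lemma pref_unact: assumes "r \<in> perms k" "k \<le> m" "m \<le> length \<pi>"
  shows "pref m (reidx (sig' r) \<pi>) = reidx (sig' r) (pref m \<pi>)"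
  using pref_reidx[OF bij_lt_sym[OF bij_lt_sig[OF assms(1,2)]] assms(3)] .

lemma act_nth_ge: "length r \<le> i \<Longrightarrow> i < length xs \<Longrightarrow> act r xs ! i = xs ! i"
  by (simp add: act_reidx sig_def)

definition wt :: "(nat list \<Rightarrow> nat) \<Rightarrow> real \<Rightarrow> nat \<Rightarrow> nat list \<Rightarrow> real" where
  "wt c \<theta> k r = \<theta> powi (int (c r) - int (c (idp k)))"

lemma wt_pos: "\<theta> > 0 \<Longrightarrow> wt c \<theta> k r > 0" by (simp add: wt_def)

lemma weight:
  assumes eq: "prefix_equivariant N c" and th: "\<theta> > 0" and k: "1 \<le> k" "k \<le> N"
    and r: "r \<in> perms k" and pi: "\<pi> \<in> perms N" and pk: "pref k \<pi> = idp k"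
  shows "\<theta> ^ c (act r \<pi>) = wt c \<theta> k r * \<theta> ^ c \<pi>"
proof -
  have "int (c \<pi>) - int (c (act r \<pi>)) = int (c (idp k)) - int (c r)"
    using eq k r pi sorted_of_pref[OF pk] unfolding prefix_equivariant_def by blast
  then have e: "int (c (act r \<pi>)) = int (c \<pi>) + (int (c r) - int (c (idp k)))" by linarith
  have "\<theta> ^ c (act r \<pi>) = \<theta> powi int (c (act r \<pi>))" by simp
  also have "\<dots> = \<theta> powi int (c \<pi>) * \<theta> powi (int (c r) - int (c (idp k)))"
    unfolding e using th by (simp add: power_int_add)
  finally show ?thesis by (simp add: wt_def)
qed

lemma inj_act: "r \<in> perms k \<Longrightarrow> \<forall>x\<in>A. k \<le> length x \<Longrightarrow> inj_on (act r) A"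
  by (rule inj_on_inverseI[where g="reidx (sig' r)"]) (simp add: unact_act)

lemma sum_act:
  assumes eq: "prefix_equivariant N c" and th: "\<theta> > 0" and k: "1 \<le> k" "k \<le> N"
    and r: "r \<in> perms k" and A: "A \<subseteq> {\<pi> \<in> perms N. pref k \<pi> = idp k}"
  shows "(\<Sum>\<pi>\<in>act r ` A. \<theta> ^ c \<pi>) = wt c \<theta> k r * (\<Sum>\<pi>\<in>A. \<theta> ^ c \<pi>)"
proof -
  have "inj_on (act r) A" using A k perm_mem by (intro inj_act[OF r]) auto
  then have "(\<Sum>\<pi>\<in>act r ` A. \<theta> ^ c \<pi>) = (\<Sum>\<pi>\<in>A. \<theta> ^ c (act r \<pi>))" by (simp add: sum.reindex)
  also have "\<dots> = (\<Sum>\<pi>\<in>A. wt c \<theta> k r * \<theta> ^ c \<pi>)"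
    using A by (intro sum.cong refl weight[OF eq th k r]) auto
  finally show ?thesis by (simp add: sum_distrib_left)
qed

lemma prefixed_act:
  assumes r: "r \<in> perms k" and s: "k \<le> length s" "length s \<le> N"
  shows "prefixed N (act r s) = act r ` prefixed N s"
proof
  let ?m = "length s"
  have ls: "length r \<le> length s" using r s perm_mem by simp
  show "prefixed N (act r s) \<subseteq> act r ` prefixed N s"
  proof
    fix t assume t: "t \<in> prefixed N (act r s)"
    then have tp: "t \<in> perms N" and pt: "pref ?m t = act r s" using ls by (auto simp: prefixed_def)
    have lt: "length t = N" using tp perm_mem by blast
    let ?p = "reidx (sig' r) t"
    have "t = act r ?p" using act_unact[OF r] lt s by simp
    moreover have "?p \<in> prefixed N s"
    proof -
      have "?p \<in> perms N" using unact_perms[OF r tp] s by simp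
      moreover have "pref ?m ?p = s"
        using pref_unact[OF r s(1)] lt s pt unact_act[OF r s(1)] by simp
      ultimately show ?thesis by (simp add: prefixed_def)
    qed
    ultimately show "t \<in> act r ` prefixed N s" by blast
  qed
  show "act r ` prefixed N s \<subseteq> prefixed N (act r s)"
  proof
    fix t assume "t \<in> act r ` prefixed N s"
    then obtain \<pi> where t: "t = act r \<pi>" and pi: "\<pi> \<in> perms N" "pref ?m \<pi> = s"
      by (auto simp: prefixed_def)
    have lp: "length \<pi> = N" using pi perm_mem by blast
    have "act r \<pi> \<in> perms N" using act_perms[OF r pi(1)] s by simp
    moreover have "pref ?m (act r \<pi>) = act r s" using pref_act[OF r s(1)] lp s pi by simp
    ultimately show "t \<in> prefixed N (act r s)" using t ls by (simp add: prefixed_def)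
  qed
qed

lemma prefixed_sub:
  assumes "k \<le> length s" "pref k s = idp k"
  shows "prefixed N s \<subseteq> {\<pi> \<in> perms N. pref k \<pi> = idp k}"
proof
  fix x assume x: "x \<in> prefixed N s"
  then have "pref k x = pref k (pref (length s) x)" using assms(1) by (simp add: pref_pref)
  also have "\<dots> = idp k" using x assms(2) by (simp add: prefixed_def)
  finally show "x \<in> {\<pi> \<in> perms N. pref k \<pi> = idp k}" using x by (simp add: prefixed_def)
qed

lemma D_act:
  assumes eq: "prefix_equivariant N c" and th: "\<theta> > 0" and k: "1 \<le> k" "k \<le> N"
    and r: "r \<in> perms k" and s: "k \<le> length s" "length s \<le> N" "pref k s = idp k"
  shows "D N c \<theta> (act r s) = wt c \<theta> k r * D N c \<theta> s"
  unfolding D_def prefixed_act[OF r s(1,2)]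
  by (rule sum_act[OF eq th k r prefixed_sub[OF s(1,3)]])

lemma winnable_act:
  assumes r: "r \<in> perms k" and s: "k < length s" "length s \<le> N"
  shows "winnable N (act r s) = act r ` winnable N s"
proof -
  have ls: "length r \<le> length s" using r s perm_mem by simp
  have pr: "prefixed N (act r s) = act r ` prefixed N s" using prefixed_act[OF r] s by simp
  have n: "act r \<pi> ! (length s - 1) = \<pi> ! (length s - 1)" if "\<pi> \<in> prefixed N s" for \<pi>
  proof -
    have "length \<pi> = N" using that perm_mem by (auto simp: prefixed_def)
    then show ?thesis using act_nth_ge[of r "length s - 1" \<pi>] s ls perm_mem[OF r] by simp
  qed
  have "winnable N (act r s) = {t \<in> act r ` prefixed N s. t ! (length s - 1) = N}"
    by (simp add: winnable_def pr ls)
  also have "\<dots> = act r ` {\<pi> \<in> prefixed N s. act r \<pi> ! (length s - 1) = N}" by blast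
  also have "{\<pi> \<in> prefixed N s. act r \<pi> ! (length s - 1) = N} = winnable N s"
    unfolding winnable_def using n by (intro Collect_cong) (metis (no_types, lifting))
  finally show ?thesis .
qed

lemma S_act:
  assumes eq: "prefix_equivariant N c" and th: "\<theta> > 0" and k: "1 \<le> k" "k \<le> N"
    and r: "r \<in> perms k" and s: "k < length s" "length s \<le> N" "pref k s = idp k"
  shows "S N c \<theta> (act r s) = S N c \<theta> s"
proof -
  have ws: "winnable N s \<subseteq> {\<pi> \<in> perms N. pref k \<pi> = idp k}"
    using prefixed_sub[of k s N] s by (auto simp: winnable_def)
  have "S N c \<theta> (act r s) = (wt c \<theta> k r * (\<Sum>\<pi>\<in>winnable N s. \<theta> ^ c \<pi>)) / (wt c \<theta> k r * D N c \<theta> s)"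
    unfolding S_def winnable_act[OF r s(1,2)] sum_act[OF eq th k r ws]
    using D_act[OF eq th k r] s by simp
  also have "\<dots> = S N c \<theta> s" using wt_pos[OF th, of c k r] by (simp add: S_def)
  finally show ?thesis .
qed

lemma children_act:
  assumes r: "r \<in> perms k" and s: "k \<le> length s"
  shows "{t \<in> perms (Suc (length (act r s))). pref (length (act r s)) t = act r s}
       = act r ` {t \<in> perms (Suc (length s)). pref (length s) t = s}"
proof -
  have ls: "length r \<le> length s" using r s perm_mem by simp
  let ?m = "length s"
  show ?thesis
  proof
    show "{t \<in> perms (Suc (length (act r s))). pref (length (act r s)) t = act r s}
       \<subseteq> act r ` {t \<in> perms (Suc (length s)). pref (length s) t = s}"
    proof
      fix t assume "t \<in> {t \<in> perms (Suc (length (act r s))). pref (length (act r s)) t = act r s}"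
      then have tp: "t \<in> perms (Suc ?m)" and pt: "pref ?m t = act r s" using ls by auto
      have lt: "length t = Suc ?m" using tp perm_mem by blast
      let ?p = "reidx (sig' r) t"
      have "t = act r ?p" using act_unact[OF r] lt s by simp
      moreover have "?p \<in> perms (Suc ?m)" using unact_perms[OF r tp] s by simp
      moreover have "pref ?m ?p = s"
        using pref_unact[OF r s(1)] lt s pt unact_act[OF r s(1)] by simp
      ultimately show "t \<in> act r ` {t \<in> perms (Suc (length s)). pref (length s) t = s}" by blast
    qed
    show "act r ` {t \<in> perms (Suc (length s)). pref (length s) t = s}
      \<subseteq> {t \<in> perms (Suc (length (act r s))). pref (length (act r s)) t = act r s}"
    proof
      fix t assume "t \<in> act r ` {t \<in> perms (Suc (length s)). pref (length s) t = s}"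
      then obtain \<pi> where t: "t = act r \<pi>" and pi: "\<pi> \<in> perms (Suc ?m)" "pref ?m \<pi> = s" by auto
      have lp: "length \<pi> = Suc ?m" using pi perm_mem by blast
      have "act r \<pi> \<in> perms (Suc ?m)" using act_perms[OF r pi(1)] s by simp
      moreover have "pref ?m (act r \<pi>) = act r s" using pref_act[OF r s(1)] lp s pi by simp
      ultimately show "t \<in> {t \<in> perms (Suc (length (act r s))). pref (length (act r s)) t = act r s}"
        using t ls by simp
    qed
  qed
qed

lemma Sc_act:
  assumes eq: "prefix_equivariant N c" and th: "\<theta> > 0" and k: "1 \<le> k" "k \<le> N"
    and r: "r \<in> perms k"
  shows "k \<le> length s \<Longrightarrow> length s + j \<le> N \<Longrightarrow> pref k s = idp k \<Longrightarrow>
     Sc_aux j N c \<theta> (act r s) = Sc_aux j N c \<theta> s"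
proof (induction j arbitrary: s)
  case 0 then show ?case by simp
next
  case (Suc j)
  have ls: "length r \<le> length s" using r Suc perm_mem by simp
  let ?ch = "{t \<in> perms (Suc (length s)). pref (length s) t = s}"
  let ?f = "\<lambda>q'. D N c \<theta> q' * max (S N c \<theta> q') (Sc_aux j N c \<theta> q')"
  have inj: "inj_on (act r) ?ch" using Suc perm_mem by (intro inj_act[OF r]) auto
  have trm: "?f (act r t) = wt c \<theta> k r * ?f t" if t: "t \<in> ?ch" for t
  proof -
    have lt: "length t = Suc (length s)" using t perm_mem by auto
    have pt: "pref k t = idp k" using t Suc pref_pref[of k "length s" t] by auto
    have "D N c \<theta> (act r t) = wt c \<theta> k r * D N c \<theta> t"
      using D_act[OF eq th k r] lt pt Suc by simp
    moreover have "S N c \<theta> (act r t) = S N c \<theta> t"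
      using S_act[OF eq th k r] lt pt Suc by simp
    moreover have "Sc_aux j N c \<theta> (act r t) = Sc_aux j N c \<theta> t"
      using Suc.IH[of t] lt pt Suc by simp
    ultimately show ?thesis by simp
  qed
  have "Sc_aux (Suc j) N c \<theta> (act r s) = (\<Sum>q'\<in>act r ` ?ch. ?f q') / D N c \<theta> (act r s)"
    using children_act[OF r Suc.prems(1)] by simp
  also have "\<dots> = (\<Sum>q'\<in>?ch. ?f (act r q')) / D N c \<theta> (act r s)"
    by (simp add: sum.reindex[OF inj])
  also have "\<dots> = (wt c \<theta> k r * (\<Sum>q'\<in>?ch. ?f q')) / (wt c \<theta> k r * D N c \<theta> s)"
    using trm D_act[OF eq th k r] Suc.prems by (simp add: sum_distrib_left)
  also have "\<dots> = Sc_aux (Suc j) N c \<theta> s" using wt_pos[OF th, of c k r] by simp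
  finally show ?case .
qed


lemma perm_set: "r \<in> perms k \<Longrightarrow> set r = {1..k}" and perm_distinct: "r \<in> perms k \<Longrightarrow> distinct r"
  by (auto simp: perms_def)

lemma R_last:
  assumes r: "r \<in> perms k" and k: "1 \<le> k" and p: "pref (k - 1) r = idp (k - 1)" and l: "r ! (k - 1) = k"
  shows "r = idp k"
proof -
  have lr: "length r = k" using perm_mem[OF r] .
  have d: "distinct r" using perm_distinct[OF r] .
  let ?t = "take (k - 1) r"
  have lt: "length ?t = k - 1" using lr by simp
  have dt: "distinct ?t" using d by simp
  have sub: "set ?t \<subseteq> {1..k - 1}"
  proof
    fix x assume "x \<in> set ?t"
    then obtain i where i: "i < k - 1" "x = r ! i" using lt by (auto simp: in_set_conv_nth)
    have "x \<in> {1..k}" using i lr perm_set[OF r] nth_mem[of i r] by auto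
    moreover have "x \<noteq> k" using i l d lr nth_eq_iff_index_eq[OF d, of i "k - 1"] by auto
    ultimately show "x \<in> {1..k - 1}" by auto
  qed
  have "set ?t = {1..k - 1}"
    using card_subset_eq[OF _ sub] distinct_card[OF dt] lt by simp
  then have "flat ?t = ?t" using lt flat_id by simp
  then have tt: "?t = idp (k - 1)" using p by (simp add: pref_def)
  show ?thesis
  proof (rule nth_equalityI)
    show "length r = length (idp k)" using lr by simp
    fix i assume "i < length r"
    then have i: "i < k" using lr by simp
    show "r ! i = idp k ! i"
    proof (cases "i < k - 1")
      case True
      then have "r ! i = ?t ! i" by simp
      also have "\<dots> = idp (k - 1) ! i" using tt by simp
      also have "\<dots> = Suc i" using True by simp
      finally show ?thesis using i by simp
    next
      case False then have "i = k - 1" using i by simp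
      then show ?thesis using l k i by simp
    qed
  qed
qed

lemma R_pos:
  assumes r: "r \<in> perms k" and k: "2 \<le> k" and p: "pref (k - 1) r = idp (k - 1)" and ne: "r \<noteq> idp k"
  shows "r ! (k - 2) = k"
proof -
  have lr: "length r = k" using perm_mem[OF r] .
  have d: "distinct r" using perm_distinct[OF r] .
  have nl: "r ! (k - 1) \<noteq> k" using R_last[OF r _ p] ne k by auto
  have "k \<in> set r" using perm_set[OF r] k by auto
  then obtain i where i: "i < k" "r ! i = k" using lr by (auto simp: in_set_conv_nth)
  have ik: "i < k - 1" using i nl by (cases "i = k - 1") auto
  let ?t = "take (k - 1) r"
  have "?t ! i = k" using i ik by simp
  have "flat ?t ! i = card {y \<in> set ?t. y \<le> ?t ! i}" using ik lr by (simp add: flat_nth)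
  also have "\<dots> = length ?t"
  proof (rule rank_max)
    show "?t ! i \<in> set ?t" by (rule nth_mem) (use ik lr in simp)
    show "\<forall>y\<in>set ?t. y \<le> ?t ! i" using \<open>?t ! i = k\<close> perm_set[OF r] set_take_subset[of "k-1" r] by auto
    show "distinct ?t" using d by simp
  qed
  finally have "flat ?t ! i = k - 1" using lr by simp
  moreover have "flat ?t ! i = Suc i" using p ik by (simp add: pref_def)
  ultimately have "i = k - 2" by simp
  then show ?thesis using i by simp
qed

lemma rank_take_max:
  assumes pi: "\<pi> \<in> perms N" and m: "m \<le> N" and i: "i < m" and v: "\<pi> ! i = N"
  shows "pref m \<pi> ! i = m"
proof -
  have lp: "length \<pi> = N" using perm_mem[OF pi] .
  let ?t = "take m \<pi>"
  have "pref m \<pi> ! i = card {y \<in> set ?t. y \<le> ?t ! i}" using i m lp by (simp add: pref_def flat_nth)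
  also have "\<dots> = length ?t"
  proof (rule rank_max)
    show "?t ! i \<in> set ?t" by (rule nth_mem) (use i m lp in simp)
    show "\<forall>y\<in>set ?t. y \<le> ?t ! i" using v i perm_set[OF pi] set_take_subset[of m \<pi>] by auto
    show "distinct ?t" using perm_distinct[OF pi] by simp
  qed
  finally show ?thesis using m lp by simp
qed

lemma D_pos:
  assumes th: "\<theta> > 0" and m: "m \<le> N" shows "D N c \<theta> (idp m) > 0"
proof -
  have f: "finite (prefixed N (idp m))" using perms_finite[of N] by (simp add: prefixed_def)
  have "idp N \<in> prefixed N (idp m)" using m by (simp add: prefixed_def idp_perm pref_idp)
  then show ?thesis unfolding D_def using th f
    by (intro sum_pos) auto
qed

lemma Sc_aux_nonneg: assumes th: "\<theta> > 0" shows "Sc_aux j N c \<theta> p \<ge> 0"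
proof (cases j)
  case 0 then show ?thesis by simp
next
  case (Suc j')
  have Dn: "D N c \<theta> x \<ge> 0" for x unfolding D_def using th by (intro sum_nonneg) simp
  have Sn: "S N c \<theta> x \<ge> 0" for x unfolding S_def using th Dn
    by (intro divide_nonneg_nonneg sum_nonneg) auto
  show ?thesis using Suc Dn Sn
    by (auto intro!: divide_nonneg_nonneg sum_nonneg mult_nonneg_nonneg intro: order.trans[OF _ max.cobounded1])
qed


theorem theorem3p6:
  fixes N k :: nat and c :: "nat list \<Rightarrow> nat" and \<theta> :: real
  assumes "prefix_equivariant N c" and "\<theta> > 0" and "2 \<le> k" and "k \<le> N"
  defines "p \<equiv> idp (k - 1)" and "q \<equiv> idp k"
  defines "R \<equiv> {r \<in> perms k. r \<noteq> q \<and> pref (k - 1) r = p}"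
  shows "Sc_hat N c \<theta> p = Sbar_hat N c \<theta> q
           + Sc_hat N c \<theta> q * (\<Sum>r\<in>R. \<theta> powi (int (c r) - int (c q)))
       \<and> S_hat N c \<theta> p = S_hat N c \<theta> q * (\<Sum>r\<in>R. \<theta> powi (int (c r) - int (c q)))"
proof -
  note eq = assms(1) and th = assms(2)
  have k2: "2 \<le> k" and kN: "k \<le> N" using assms by auto
  have k: "1 \<le> k" "k \<le> N" using assms by auto
  have lp: "length p = k - 1" and lq: "length q = k" by (simp_all add: p_def q_def)
  have km: "length p - 1 = k - 2" using lp by simp
  have qperm: "q \<in> perms k" by (simp add: q_def idp_perm)
  have fR: "finite R" using perms_finite[of k] by (simp add: R_def)
  have qR: "q \<notin> R" by (simp add: R_def)
  have wq: "\<theta> powi (int (c r) - int (c q)) = wt c \<theta> k r" for r by (simp add: wt_def q_def)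
  have actq: "act r q = r" if r: "r \<in> perms k" for r
  proof (rule nth_equalityI)
    have lr: "length r = k" using perm_mem[OF r] .
    show "length (act r q) = length r" using lr lq by simp
    fix i assume "i < length (act r q)"
    then have i: "i < k" using lr lq by simp
    have "r ! i \<in> {1..k}" using perm_set[OF r] lr i nth_mem[of i r] by auto
    then have ri: "r ! i - 1 < k" "Suc (r ! i - 1) = r ! i" by auto
    have "act r q ! i = q ! (sig r i)" using act_reidx[of r q] lr lq i by simp
    also have "\<dots> = q ! (r ! i - 1)" using i lr by (simp add: sig_def)
    also have "\<dots> = r ! i" using ri by (simp add: q_def)
    finally show "act r q ! i = r ! i" .
  qed
  have pq: "pref k q = q" by (simp add: q_def pref_idp)
  have Dp: "D N c \<theta> p > 0" using D_pos[OF th] kN by (simp add: p_def)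
  have Dq: "D N c \<theta> q > 0" using D_pos[OF th] kN by (simp add: q_def)
  have Rmem: "r \<in> perms k" "r \<noteq> q" "pref (k - 1) r = p" if "r \<in> R" for r
    using that by (auto simp: R_def)
  have ch: "{q' \<in> perms (Suc (length p)). pref (length p) q' = p} = insert q R"
    using lp k2 qperm by (auto simp: R_def p_def q_def pref_idp)
  have Scp: "Sc N c \<theta> p = Sc_aux (Suc (N - k)) N c \<theta> p"
    unfolding Sc_def using lp k2 kN by (simp add: Suc_diff_le)
  let ?f = "\<lambda>q'. D N c \<theta> q' * max (S N c \<theta> q') (Sc_aux (N - k) N c \<theta> q')"
  have fq: "?f q = Sbar_hat N c \<theta> q" by (simp add: Sbar_hat_def Sbar_def Sc_def lq)
  have fr: "?f r = wt c \<theta> k r * Sc_hat N c \<theta> q" if r: "r \<in> R" for r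
  proof -
    note rm = Rmem[OF r]
    have "winnable N r = {}"
    proof (rule ccontr)
      assume "winnable N r \<noteq> {}"
      then obtain \<pi> where pi: "\<pi> \<in> perms N" "pref k \<pi> = r" "\<pi> ! (k - 1) = N"
        using perm_mem[OF rm(1)] by (auto simp: winnable_def prefixed_def)
      have "r ! (k - 1) = k" using rank_take_max[OF pi(1) kN _ pi(3)] pi(2) k by simp
      then have "r = q" using R_last[OF rm(1) k(1)] rm(3) by (simp add: p_def q_def)
      then show False using rm(2) by simp
    qed
    then have S0: "S N c \<theta> r = 0" by (simp add: S_def)
    have "Sc_aux (N - k) N c \<theta> r = Sc_aux (N - k) N c \<theta> q"
      using Sc_act[OF eq th k rm(1), of q "N - k"] lq kN pq actq[OF rm(1)] by (simp add: q_def)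
    moreover have "D N c \<theta> r = wt c \<theta> k r * D N c \<theta> q"
      using D_act[OF eq th k rm(1), of q] lq kN pq actq[OF rm(1)] by (simp add: q_def)
    ultimately show ?thesis using S0 Sc_aux_nonneg[OF th, of "N - k" N c r]
      by (simp add: Sc_hat_def Sc_def lq)
  qed
  have part1: "Sc_hat N c \<theta> p = Sbar_hat N c \<theta> q
           + Sc_hat N c \<theta> q * (\<Sum>r\<in>R. \<theta> powi (int (c r) - int (c q)))"
  proof -
    have "Sc_hat N c \<theta> p = (\<Sum>q'\<in>insert q R. ?f q')"
      using Dp unfolding Sc_hat_def Scp by (simp add: ch[symmetric])
    also have "\<dots> = ?f q + (\<Sum>r\<in>R. ?f r)" using fR qR by simp
    also have "(\<Sum>r\<in>R. ?f r) = (\<Sum>r\<in>R. Sc_hat N c \<theta> q * \<theta> powi (int (c r) - int (c q)))"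
      using fr wq by (intro sum.cong) (auto simp: mult.commute)
    finally show ?thesis using fq by (simp add: sum_distrib_left)
  qed
  let ?g = "\<lambda>\<pi>. \<theta> ^ c \<pi>"
  have Shp: "S_hat N c \<theta> p = sum ?g (winnable N p)" using Dp by (simp add: S_hat_def S_def)
  have Shq: "S_hat N c \<theta> q = sum ?g (winnable N q)" using Dq by (simp add: S_hat_def S_def)
  have fW: "finite (winnable N p)"
    by (rule finite_subset[OF _ perms_finite[of N]]) (auto simp: winnable_def prefixed_def)
  have img: "pref k ` winnable N p \<subseteq> R"
  proof
    fix r assume "r \<in> pref k ` winnable N p"
    then obtain \<pi> where r: "r = pref k \<pi>" and pw: "\<pi> \<in> winnable N p" by blast
    have pw2: "\<pi> \<in> prefixed N p" "\<pi> ! (length p - 1) = N" using pw by (simp_all add: winnable_def)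
    have pi: "\<pi> \<in> perms N" "pref (k - 1) \<pi> = p" "\<pi> ! (k - 2) = N"
      using pw2(1) lp apply (simp_all add: prefixed_def)
      using pw2(2) km by simp
    have lpi: "length \<pi> = N" using perm_mem[OF pi(1)] .
    have "r \<in> perms k" using flat_perm[of "take k \<pi>"] perm_distinct[OF pi(1)] lpi kN
      by (simp add: r pref_def min_def split: if_splits)
    moreover have "pref (k - 1) r = p" using pi(2) pref_pref[of "k - 1" k \<pi>] r by simp
    moreover have "r \<noteq> q"
    proof
      assume "r = q"
      have "r ! (k - 2) = k" using rank_take_max[OF pi(1) kN _ pi(3)] r k2 by simp
      moreover have "q ! (k - 2) = k - 1" using k2 by (simp add: q_def)
      ultimately show False using \<open>r = q\<close> k2 by simp
    qed
    ultimately show "r \<in> R" by (simp add: R_def)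
  qed
  have fib: "{\<pi> \<in> winnable N p. pref k \<pi> = r} = act r ` winnable N q" if r: "r \<in> R" for r
  proof -
    note rm = Rmem[OF r]
    have lr: "length r = k" using perm_mem[OF rm(1)] .
    have r2: "r ! (k - 2) = k" using R_pos[OF rm(1) k2] rm by (simp add: p_def q_def)
    have bs: "bij_lt k (sig r) (sig' r)" using bij_lt_sig[OF rm(1)] by simp
    have sig2: "sig r (k - 2) = k - 1" using r2 lr k2 by (simp add: sig_def)
    have sig'2: "sig' r (k - 1) = k - 2" using bs sig2 k2 unfolding bij_lt_def
      by (metis diff_less zero_less_numeral less_le_trans k2 zero_less_numeral)
    show ?thesis
    proof
      show "{\<pi> \<in> winnable N p. pref k \<pi> = r} \<subseteq> act r ` winnable N q"
      proof
        fix \<pi> assume "\<pi> \<in> {\<pi> \<in> winnable N p. pref k \<pi> = r}"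
        then have pw2: "\<pi> \<in> prefixed N p" "\<pi> ! (length p - 1) = N" "pref k \<pi> = r"
          by (simp_all add: winnable_def)
        have pi: "\<pi> \<in> perms N" "pref k \<pi> = r" "\<pi> ! (k - 2) = N"
          using pw2(1,3) apply (simp_all add: prefixed_def)
          using pw2(2) km by simp
        have lpi: "length \<pi> = N" using perm_mem[OF pi(1)] .
        let ?p' = "reidx (sig' r) \<pi>"
        have "\<pi> = act r ?p'" using act_unact[OF rm(1)] lpi kN by simp
        moreover have "?p' \<in> winnable N q"
        proof -
          have "?p' \<in> perms N" using unact_perms[OF rm(1) pi(1) kN] .
          moreover have "pref k ?p' = q"
            using pref_unact[OF rm(1) order.refl] lpi kN pi(2) unact_act[OF rm(1), of q] lq actq[OF rm(1)]
            by simp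
          moreover have "?p' ! (k - 1) = N" using lpi kN k2 sig'2 pi(3) by simp
          ultimately show ?thesis using lq by (simp add: winnable_def prefixed_def)
        qed
        ultimately show "\<pi> \<in> act r ` winnable N q" by blast
      qed
      show "act r ` winnable N q \<subseteq> {\<pi> \<in> winnable N p. pref k \<pi> = r}"
      proof
        fix t assume "t \<in> act r ` winnable N q"
        then obtain \<pi> where t: "t = act r \<pi>" and pi: "\<pi> \<in> perms N" "pref k \<pi> = q" "\<pi> ! (k - 1) = N"
          using lq by (auto simp: winnable_def prefixed_def)
        have lpi: "length \<pi> = N" using perm_mem[OF pi(1)] .
        have tp: "t \<in> perms N" using act_perms[OF rm(1) pi(1) kN] t by simp
        have tk: "pref k t = r" using pref_act[OF rm(1) order.refl] lpi kN pi(2) actq[OF rm(1)] t by simp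
        have "pref (k - 1) t = p" using pref_pref[of "k - 1" k t] tk rm(3) by simp
        moreover have "t ! (k - 2) = N"
          using t act_reidx[of r \<pi>] lr lpi kN k2 sig2 pi(3) by simp
        ultimately show "t \<in> {\<pi> \<in> winnable N p. pref k \<pi> = r}"
          using tp tk km lp by (simp add: winnable_def prefixed_def)
      qed
    qed
  qed
  have Wq: "winnable N q \<subseteq> {\<pi> \<in> perms N. pref k \<pi> = idp k}"
    using lq by (auto simp: winnable_def prefixed_def q_def)
  have "sum ?g (winnable N p) = (\<Sum>r\<in>R. sum ?g {\<pi> \<in> winnable N p. pref k \<pi> = r})"
    using sum.group[OF fW fR img, of ?g] by simp
  also have "\<dots> = (\<Sum>r\<in>R. wt c \<theta> k r * sum ?g (winnable N q))"
    using fib sum_act[OF eq th k _ Wq] Rmem by (intro sum.cong) auto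
  also have "\<dots> = sum ?g (winnable N q) * (\<Sum>r\<in>R. wt c \<theta> k r)"
    by (subst sum_distrib_left) (simp add: mult.commute)
  finally have part2: "S_hat N c \<theta> p = S_hat N c \<theta> q * (\<Sum>r\<in>R. \<theta> powi (int (c r) - int (c q)))"
    using Shp Shq wq by simp
  show ?thesis using part1 part2 by blast
qed

end
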